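(* Let $\mathcal{G}=(G,\lambda)$ be a simple temporal clique, $G=(V,E)$, and let $\mathcal{T}^-=(V,E^-_T)$ be obtained by the forward construction. Then the forward fireworks cover $S^-_T=\{\{u,v\}\in E:(u,v)\in E^-_T\}\cup\{\{u,v\}\in E: u \text{ is an emitter}\}$ is a temporal spanner of $\mathcal{G}$.
   Context: A simple temporal clique is a pair $\mathcal{G}=(G,\lambda)$ where $G=(V,E)$ is the complete graph on a finite vertex set $V$ and $\lambda:E\to\mathbb{N}$ assigns to each edge a single integer label such that any two distinct edges sharing an endpoint have different labels; the label of an arc $(x,y)$ is $\lambda(\{x,y\})$. A journey from $x$ to $y$ is a sequence of vertices $x=u_0,\dots,u_k=y$ ($k\ge1$) with $\lambda(\{u_{i-1},u_i\})<\lambda(\{u_i,u_{i+1}\})$ for $1\le i<k$. A set $E'\subseteq E$ is a temporal spanner of $\mathcal{G}$ if for every ordered pair of distinct vertices $x,y$ there is a journey from $x$ to $y$ using only edges of $E'$. For a vertex $v$, $e^-(v)$ is the edge incident to $v$ with smallest label. Forward construction: let $E^-$ be the set of arcs $(u,v)$ with $\{u,v\}=e^-(v)$, except that if $e^-(u)=e^-(v)=\{u,v\}$ only one of the two arcs $(u,v),(v,u)$ is included (arbitrarily). Initialize $E^-_T:=E^-$. For every vertex $v$ of out-degree at least $2$ in $(V,E^-)$, let $(v,u_1),\dots,(v,u_\ell)$ be its out-arcs in $E^-$, where $(v,u_\ell)$ has the largest label; for each $i<\ell$, if $u_i$ has out-degree $0$ in $(V,E^-)$, replace $(v,u_i)$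 by $(u_i,v)$ in $E^-_T$, and otherwise remove $(v,u_i)$ from $E^-_T$. Set $\mathcal{T}^-=(V,E^-_T)$. An emitter is a vertex of out-degree $0$ in $\mathcal{T}^-$. *)

theory Defs
  imports Main
begin

definition clique_edges :: "'a set \<Rightarrow> 'a set set" where
  "clique_edges V = {{x, y} | x y. x \<in> V \<and> y \<in> V \<and> x \<noteq> y}"

definition simple_temporal_clique :: "'a set \<Rightarrow> ('a set \<Rightarrow> nat) \<Rightarrow> bool" where
  "simple_temporal_clique V lam \<longleftrightarrow> finite V \<and>
     (\<forall>e \<in> clique_edges V. \<forall>f \<in> clique_edges V. e \<noteq> f \<and> e \<inter> f \<noteq> {} \<longrightarrow> lam e \<noteq> lam f)"

definition emin :: "'a set \<Rightarrow> ('a set \<Rightarrow> nat) \<Rightarrow> 'a \<Rightarrow> 'a set" where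
  "emin V lam v = (ARG_MIN lam e. e \<in> clique_edges V \<and> v \<in> e)"

text \<open>A is a valid choice of the arc set E^- (the arbitrary choice for
  edges that are minimal at both endpoints is left open).\<close>
definition is_Eminus :: "'a set \<Rightarrow> ('a set \<Rightarrow> nat) \<Rightarrow> ('a \<times> 'a) set \<Rightarrow> bool" where
  "is_Eminus V lam A \<longleftrightarrow>
     (\<forall>u v. (u, v) \<in> A \<longrightarrow> u \<in> V \<and> v \<in> V \<and> u \<noteq> v \<and> {u, v} = emin V lam v) \<and>
     (\<forall>u \<in> V. \<forall>v \<in> V. u \<noteq> v \<and> {u, v} = emin V lam v \<longrightarrow>
        (if {u, v} = emin V lam u then ((u, v) \<in> A \<longleftrightarrow> (v, u) \<notin> A) else (u, v) \<in> A))"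

definition out_deg :: "('a \<times> 'a) set \<Rightarrow> 'a \<Rightarrow> nat" where
  "out_deg A v = card {w. (v, w) \<in> A}"

definition last_out :: "('a set \<Rightarrow> nat) \<Rightarrow> ('a \<times> 'a) set \<Rightarrow> 'a \<Rightarrow> 'a \<Rightarrow> bool" where
  "last_out lam A v u \<longleftrightarrow> (v, u) \<in> A \<and> (\<forall>w. (v, w) \<in> A \<longrightarrow> lam {v, w} \<le> lam {v, u})"

definition E_T :: "('a set \<Rightarrow> nat) \<Rightarrow> ('a \<times> 'a) set \<Rightarrow> ('a \<times> 'a) set" where
  "E_T lam A =
     {(v, u). (v, u) \<in> A \<and> (out_deg A v < 2 \<or> last_out lam A v u)} \<union>
     {(u, v). (v, u) \<in> A \<and> out_deg A v \<ge> 2 \<and> \<not> last_out lam A v u \<and> out_deg A u = 0}"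

definition emitter :: "'a set \<Rightarrow> ('a \<times> 'a) set \<Rightarrow> 'a \<Rightarrow> bool" where
  "emitter V T v \<longleftrightarrow> v \<in> V \<and> out_deg T v = 0"

definition fireworks_cover :: "'a set \<Rightarrow> ('a set \<Rightarrow> nat) \<Rightarrow> ('a \<times> 'a) set \<Rightarrow> 'a set set" where
  "fireworks_cover V lam A =
     {{u, v} | u v. {u, v} \<in> clique_edges V \<and> (u, v) \<in> E_T lam A} \<union>
     {{u, v} | u v. {u, v} \<in> clique_edges V \<and> emitter V (E_T lam A) u}"

definition journey :: "'a set set \<Rightarrow> ('a set \<Rightarrow> nat) \<Rightarrow> 'a \<Rightarrow> 'a \<Rightarrow> 'a list \<Rightarrow> bool" where
  "journey E' lam x y xs \<longleftrightarrow> length xs \<ge> 2 \<and> hd xs = x \<and> last xs = y \<and>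
     (\<forall>i. i + 1 < length xs \<longrightarrow> {xs ! i, xs ! (i + 1)} \<in> E') \<and>
     (\<forall>i. i + 2 < length xs \<longrightarrow> lam {xs ! i, xs ! (i + 1)} < lam {xs ! (i + 1), xs ! (i + 2)})"

definition temporal_spanner :: "'a set \<Rightarrow> ('a set \<Rightarrow> nat) \<Rightarrow> 'a set set \<Rightarrow> bool" where
  "temporal_spanner V lam E' \<longleftrightarrow> E' \<subseteq> clique_edges V \<and>
     (\<forall>x \<in> V. \<forall>y \<in> V. x \<noteq> y \<longrightarrow> (\<exists>xs. journey E' lam x y xs))"

end

theory Submission
  imports Defs
begin

lemma ce_mem: "a \<in> V \<Longrightarrow> b \<in> V \<Longrightarrow> a \<noteq> b \<Longrightarrow> {a, b} \<in> clique_edges V"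
  unfolding clique_edges_def by blast

lemma ce_finite: "finite V \<Longrightarrow> finite (clique_edges V)"
proof -
  assume "finite V"
  have "clique_edges V \<subseteq> Pow V" unfolding clique_edges_def by blast
  moreover have "finite (Pow V)" using \<open>finite V\<close> by simp
  ultimately show ?thesis by (rule finite_subset)
qed

lemma distinct_lab:
  assumes "simple_temporal_clique V lam" "a \<in> V" "b \<in> V" "c \<in> V" "a \<noteq> b" "b \<noteq> c" "a \<noteq> c"
  shows "lam {a, b} \<noteq> lam {b, c}"
proof -
  have e1: "{a,b} \<in> clique_edges V" using ce_mem[OF assms(2,3,5)] .
  have e2: "{b,c} \<in> clique_edges V" using ce_mem[OF assms(3,4,6)] .
  have na: "a \<notin> {b,c}" using assms(5,7) by simp
  have ne: "{a,b} \<noteq> {b,c}" using na by blast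
  have ni: "{a,b} \<inter> {b,c} \<noteq> {}" by simp
  have "\<forall>e \<in> clique_edges V. \<forall>f \<in> clique_edges V. e \<noteq> f \<and> e \<inter> f \<noteq> {} \<longrightarrow> lam e \<noteq> lam f"
    using assms(1) unfolding simple_temporal_clique_def by (rule conjunct2)
  then have "\<forall>f \<in> clique_edges V. {a,b} \<noteq> f \<and> {a,b} \<inter> f \<noteq> {} \<longrightarrow> lam {a,b} \<noteq> lam f"
    using e1 by (rule bspec)
  then have "{a,b} \<noteq> {b,c} \<and> {a,b} \<inter> {b,c} \<noteq> {} \<longrightarrow> lam {a,b} \<noteq> lam {b,c}"
    using e2 by (rule bspec)
  then show ?thesis using ne ni by (rule mp[OF _ conjI])
qed

lemma emin_le:
  assumes "emin V lam b = {a, b}" "c \<in> V" "c \<noteq> b" "b \<in> V"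
  shows "lam {a, b} \<le> lam {b, c}"
proof -
  let ?P = "\<lambda>e. e \<in> clique_edges V \<and> b \<in> e"
  have "?P {b, c}" using assms ce_mem[of b V c] by auto
  then have "lam (arg_min lam ?P) \<le> lam {b, c}" using arg_min_nat_lemma[of ?P "{b,c}" lam] by blast
  then show ?thesis using assms(1) unfolding emin_def by simp
qed

lemma emin_lt:
  assumes "simple_temporal_clique V lam" "emin V lam b = {a, b}" "a \<in> V" "b \<in> V" "c \<in> V"
    "a \<noteq> b" "c \<noteq> b" "c \<noteq> a"
  shows "lam {a, b} < lam {b, c}"
proof -
  have "lam {a, b} \<le> lam {b, c}" using emin_le[OF assms(2,5,7,4)] .
  moreover have "lam {a, b} \<noteq> lam {b, c}"
    using distinct_lab[OF assms(1,3,4,5,6) assms(7)[symmetric] assms(8)[symmetric]] .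
  ultimately show ?thesis by linarith
qed

lemma E_T_iff:
  "(a, b) \<in> E_T lam A \<longleftrightarrow>
    ((a, b) \<in> A \<and> (out_deg A a < 2 \<or> last_out lam A a b)) \<or>
    ((b, a) \<in> A \<and> out_deg A b \<ge> 2 \<and> \<not> last_out lam A b a \<and> out_deg A a = 0)"
  unfolding E_T_def by auto

lemma A_prop:
  assumes "is_Eminus V lam A" "(u, v) \<in> A"
  shows "u \<in> V \<and> v \<in> V \<and> u \<noteq> v \<and> {u, v} = emin V lam v"
  using assms unfolding is_Eminus_def by blast

lemma T_sub:
  assumes "is_Eminus V lam A" "(a, b) \<in> E_T lam A"
  shows "a \<in> V \<and> b \<in> V \<and> a \<noteq> b"
  using assms(2) A_prop[OF assms(1)] unfolding E_T_iff by blast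

lemma out_deg_pos:
  assumes "finite V" "\<And>w. (v, w) \<in> R \<Longrightarrow> w \<in> V" "(v, u) \<in> R"
  shows "out_deg R v \<noteq> 0"
proof -
  have "{w. (v, w) \<in> R} \<subseteq> V" using assms(2) by blast
  then have "finite {w. (v, w) \<in> R}" using assms(1) finite_subset by blast
  moreover have "u \<in> {w. (v, w) \<in> R}" using assms(3) by simp
  ultimately show ?thesis unfolding out_deg_def by (metis card_0_eq empty_iff)
qed

lemma out_deg_ex:
  assumes "out_deg R v \<noteq> 0"
  shows "\<exists>w. (v, w) \<in> R"
proof (rule ccontr)
  assume "\<not> ?thesis"
  then have "{w. (v, w) \<in> R} = {}" by blast
  then show False using assms unfolding out_deg_def by simp
qed

lemma last_ex:
  assumes "finite V" "is_Eminus V lam A" "out_deg A z \<ge> 2"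
  shows "\<exists>u. last_out lam A z u"
proof -
  define W where "W = {w. (z, w) \<in> A}"
  have "W \<subseteq> V"
  proof
    fix w assume "w \<in> W"
    then have "(z, w) \<in> A" unfolding W_def by simp
    then show "w \<in> V" using A_prop[OF assms(2)] by blast
  qed
  then have fin: "finite W" using assms(1) by (rule finite_subset)
  have ne: "W \<noteq> {}"
  proof
    assume "W = {}"
    then show False using assms(3) unfolding out_deg_def W_def[symmetric] by simp
  qed
  define f where "f = (\<lambda>w. lam {z, w})"
  define m where "m = Max (f ` W)"
  have "m \<in> f ` W" unfolding m_def using fin ne by (intro Max_in) simp_all
  then obtain u where u: "u \<in> W" "f u = m" by (elim imageE) simp
  have "\<forall>w. (z, w) \<in> A \<longrightarrow> lam {z, w} \<le> lam {z, u}"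
  proof (intro allI impI)
    fix w assume "(z, w) \<in> A"
    then have "w \<in> W" unfolding W_def by simp
    then have "f w \<in> f ` W" by (rule imageI)
    then have "f w \<le> m" unfolding m_def using fin by (intro Max_ge) simp_all
    then show "lam {z, w} \<le> lam {z, u}" using u(2) unfolding f_def by simp
  qed
  moreover have "(z, u) \<in> A" using u(1) unfolding W_def by simp
  ultimately show ?thesis unfolding last_out_def by blast
qed

lemma mono_T:
  assumes st: "simple_temporal_clique V lam" and em: "is_Eminus V lam A"
    and ab: "(a, b) \<in> E_T lam A" and bc: "(b, c) \<in> E_T lam A"
  shows "lam {a, b} < lam {b, c}"
proof -
  have V: "a \<in> V" "b \<in> V" "a \<noteq> b" "c \<in> V" "b \<noteq> c"
    using T_sub[OF em ab] T_sub[OF em bc] by auto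
  from ab[unfolded E_T_iff] show ?thesis
  proof
    assume h: "(a, b) \<in> A \<and> (out_deg A a < 2 \<or> last_out lam A a b)"
    have eb: "emin V lam b = {a, b}" using A_prop[OF em] h by auto
    show ?thesis
    proof (cases "c = a")
      case False
      then show ?thesis using emin_lt[OF st eb] V by auto
    next
      case True
      then have ba: "(b, a) \<in> E_T lam A" using bc by simp
      from ba[unfolded E_T_iff] show ?thesis
      proof
        assume h2: "(b, a) \<in> A \<and> (out_deg A b < 2 \<or> last_out lam A b a)"
        have ea: "emin V lam a = {a, b}" using A_prop[OF em, of b a] h2 by (auto simp: insert_commute)
        have "(a, b) \<in> A \<longleftrightarrow> (b, a) \<notin> A"
          using em V ea eb unfolding is_Eminus_def by (metis (no_types, lifting))
        then show ?thesis using h h2 by blast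
      next
        assume "(a, b) \<in> A \<and> out_deg A a \<ge> 2 \<and> \<not> last_out lam A a b \<and> out_deg A b = 0"
        then show ?thesis using h by auto
      qed
    qed
  next
    assume h: "(b, a) \<in> A \<and> out_deg A b \<ge> 2 \<and> \<not> last_out lam A b a \<and> out_deg A a = 0"
    from bc[unfolded E_T_iff] show ?thesis
    proof
      assume h2: "(b, c) \<in> A \<and> (out_deg A b < 2 \<or> last_out lam A b c)"
      then have lc: "last_out lam A b c" using h by auto
      then have "lam {b, a} \<le> lam {b, c}" using h unfolding last_out_def by blast
      moreover have "a \<noteq> c" using lc h by auto
      ultimately show ?thesis using distinct_lab[OF st V(1,2,4,3,5)] by (auto simp: insert_commute)
    next
      assume "(c, b) \<in> A \<and> out_deg A c \<ge> 2 \<and> \<not> last_out lam A c b \<and> out_deg A b = 0"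
      then show ?thesis using h by auto
    qed
  qed
qed

lemma end_step:
  assumes st: "simple_temporal_clique V lam" and em: "is_Eminus V lam A"
    and wz: "(w, z) \<in> E_T lam A" and ez: "emitter V (E_T lam A) z"
    and y: "y \<in> V" "y \<noteq> z" "y \<noteq> w"
  shows "lam {w, z} < lam {z, y}"
proof -
  have fin: "finite V" using st unfolding simple_temporal_clique_def by blast
  have V: "w \<in> V" "z \<in> V" "w \<noteq> z" using T_sub[OF em wz] by auto
  from wz[unfolded E_T_iff] show ?thesis
  proof
    assume h: "(w, z) \<in> A \<and> (out_deg A w < 2 \<or> last_out lam A w z)"
    have "emin V lam z = {w, z}" using A_prop[OF em] h by auto
    then show ?thesis using emin_lt[OF st] V y by auto
  next
    assume h: "(z, w) \<in> A \<and> out_deg A z \<ge> 2 \<and> \<not> last_out lam A z w \<and> out_deg A w = 0"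
    then obtain u where u: "last_out lam A z u" using last_ex[OF fin em] by blast
    then have "(z, u) \<in> E_T lam A" unfolding E_T_iff last_out_def by blast
    then have "out_deg (E_T lam A) z \<noteq> 0"
      using out_deg_pos[OF fin, of z "E_T lam A" u] T_sub[OF em] by blast
    then show ?thesis using ez unfolding emitter_def by simp
  qed
qed

lemma journey_cons:
  assumes "journey E lam b y ys" "{a, b} \<in> E" "lam {a, b} < lam {b, ys ! 1}"
  shows "journey E lam a y (a # ys) \<and> (a # ys) ! 1 = b"
proof -
  have hb: "hd ys = b" and len: "length ys \<ge> 2" using assms(1) unfolding journey_def by blast+
  have ne: "ys \<noteq> []" using len by auto
  have y0: "ys ! 0 = b" using ne hb by (simp add: hd_conv_nth)
  have e: "\<forall>i. i + 1 < length ys \<longrightarrow> {ys ! i, ys ! (i + 1)} \<in> E"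
   and l: "\<forall>i. i + 2 < length ys \<longrightarrow> lam {ys ! i, ys ! (i + 1)} < lam {ys ! (i + 1), ys ! (i + 2)}"
   and ly: "last ys = y"
    using assms(1) unfolding journey_def by blast+
  have e2: "\<forall>i. i + 1 < length (a # ys) \<longrightarrow> {(a # ys) ! i, (a # ys) ! (i + 1)} \<in> E"
  proof (intro allI impI)
    fix i assume "i + 1 < length (a # ys)"
    then show "{(a # ys) ! i, (a # ys) ! (i + 1)} \<in> E"
    proof (cases i)
      case 0
      then show ?thesis using y0 assms(2) by simp
    next
      case (Suc j)
      then have "j + 1 < length ys" using \<open>i + 1 < length (a # ys)\<close> by simp
      then have "{ys ! j, ys ! (j + 1)} \<in> E" using e by blast
      then show ?thesis using Suc by simp
    qed
  qed
  have l2: "\<forall>i. i + 2 < length (a # ys) \<longrightarrow> lam {(a # ys) ! i, (a # ys) ! (i + 1)} < lam {(a # ys) ! (i + 1), (a # ys) ! (i + 2)}"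
  proof (intro allI impI)
    fix i assume "i + 2 < length (a # ys)"
    then show "lam {(a # ys) ! i, (a # ys) ! (i + 1)} < lam {(a # ys) ! (i + 1), (a # ys) ! (i + 2)}"
    proof (cases i)
      case 0
      then show ?thesis using y0 assms(3) by (simp add: numeral_2_eq_2)
    next
      case (Suc j)
      then have "j + 2 < length ys" using \<open>i + 2 < length (a # ys)\<close> by simp
      then have "lam {ys ! j, ys ! (j + 1)} < lam {ys ! (j + 1), ys ! (j + 2)}" using l by blast
      then show ?thesis using Suc by (simp add: numeral_2_eq_2)
    qed
  qed
  have "journey E lam a y (a # ys)" unfolding journey_def using e2 l2 len ly ne by simp
  then show ?thesis using y0 by simp
qed

lemma journey3: fixes S :: "'a set set" and lam :: "'a set \<Rightarrow> nat"
 assumes abS: "{a,b} \<in> S" and byS: "{b,y} \<in> S" and lt: "lam {a, b} < lam {b, y}"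
 shows "\<exists>xs. journey S lam a y xs \<and> xs ! 1 = b"
proof -
      have e3: "\<forall>i. i + 1 < length [a, b, y] \<longrightarrow> {[a, b, y] ! i, [a, b, y] ! (i + 1)} \<in> S"
      proof (intro allI impI)
        fix i assume "i + 1 < length [a, b, y]"
        then have "i < 2" by simp
        then have "i = 0 \<or> i = 1" by linarith
        then show "{[a, b, y] ! i, [a, b, y] ! (i + 1)} \<in> S"
        proof
          assume "i = 0" then show ?thesis using abS by simp
        next
          assume "i = 1" then show ?thesis using byS by simp
        qed
      qed
      have l3: "\<forall>i. i + 2 < length [a, b, y] \<longrightarrow> lam {[a, b, y] ! i, [a, b, y] ! (i + 1)} < lam {[a, b, y] ! (i + 1), [a, b, y] ! (i + 2)}"
      proof (intro allI impI)
        fix i assume "i + 2 < length [a, b, y]"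
        then have "i = 0" by simp
        then show "lam {[a, b, y] ! i, [a, b, y] ! (i + 1)} < lam {[a, b, y] ! (i + 1), [a, b, y] ! (i + 2)}"
          using lt by simp
      qed
      have b3: "length [a, b, y] \<ge> 2" "hd [a, b, y] = a" "last [a, b, y] = y" by simp_all
      have j3: "journey S lam a y [a, b, y]" unfolding journey_def using e3 l3 b3 by blast
      have "[a, b, y] ! 1 = b" by simp
      then show ?thesis using j3 by blast
qed

lemma main_L:
  assumes st: "simple_temporal_clique V lam" and em: "is_Eminus V lam A"
  shows "(a, b) \<in> E_T lam A \<Longrightarrow> y \<in> V \<Longrightarrow> y \<noteq> a \<Longrightarrow>
    \<exists>xs. journey (fireworks_cover V lam A) lam a y xs \<and> xs ! 1 = b"
proof (induction "card {e \<in> clique_edges V. lam {a, b} < lam e}" arbitrary: a b rule: less_induct)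
  case less
  let ?S = "fireworks_cover V lam A"
  let ?T = "E_T lam A"
  have fin: "finite V" using st unfolding simple_temporal_clique_def by blast
  have V: "a \<in> V" "b \<in> V" "a \<noteq> b" using T_sub[OF em less.prems(1)] by auto
  have abS: "{a, b} \<in> ?S" unfolding fireworks_cover_def using less.prems(1) ce_mem[OF V] by blast
  show ?case
  proof (cases "y = b")
    case True
    have "journey ?S lam a y [a, b]" unfolding journey_def using True abS by auto
    then show ?thesis by auto
  next
    case yb: False
    show ?thesis
    proof (cases "emitter V ?T b")
      case True
      have ceby: "{b, y} \<in> clique_edges V" using ce_mem[OF V(2) less.prems(2)] yb by simp
      have "{b, y} \<in> {{u, v} |u v. {u, v} \<in> clique_edges V \<and> emitter V ?T u}"
        unfolding mem_Collect_eq
        by (rule exI[of _ b], rule exI[of _ y], intro conjI refl ceby True)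
      then have byS: "{b, y} \<in> ?S" unfolding fireworks_cover_def by (rule UnI2)
      have lt: "lam {a, b} < lam {b, y}" using end_step[OF st em less.prems(1) True less.prems(2) yb less.prems(3)] .
      show ?thesis using journey3[OF abS byS lt] .
    next
      case False
      then have "out_deg ?T b \<noteq> 0" using V unfolding emitter_def by auto
      then obtain c where bc: "(b, c) \<in> ?T" using out_deg_ex[of ?T b] by blast
      have lt: "lam {a, b} < lam {b, c}" using mono_T[OF st em less.prems(1) bc] .
      have Vc: "c \<in> V" "b \<noteq> c" using T_sub[OF em bc] by auto
      have sub: "{e \<in> clique_edges V. lam {b, c} < lam e} \<subset> {e \<in> clique_edges V. lam {a, b} < lam e}"
      proof
        show "{e \<in> clique_edges V. lam {b, c} < lam e} \<subseteq> {e \<in> clique_edges V. lam {a, b} < lam e}"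
          using lt by auto
        have "{b, c} \<in> {e \<in> clique_edges V. lam {a, b} < lam e}" using ce_mem[OF V(2) Vc] lt by auto
        then show "{e \<in> clique_edges V. lam {b, c} < lam e} \<noteq> {e \<in> clique_edges V. lam {a, b} < lam e}"
          by auto
      qed
      have "card {e \<in> clique_edges V. lam {b, c} < lam e} < card {e \<in> clique_edges V. lam {a, b} < lam e}"
      proof (rule psubset_card_mono[OF _ sub])
        show "finite {e \<in> clique_edges V. lam {a, b} < lam e}" using ce_finite[OF fin] by simp
      qed
      then have "\<exists>xs. journey ?S lam b y xs \<and> xs ! 1 = c"
        by (rule less.hyps[OF _ bc less.prems(2) yb])
      then obtain ys where ys: "journey ?S lam b y ys" "ys ! 1 = c" by blast
      have lt2: "lam {a, b} < lam {b, ys ! 1}" using lt ys(2) by simp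
      show ?thesis using journey_cons[OF ys(1) abS lt2] by blast
    qed
  qed
qed

theorem theorem2:
  fixes V :: "'a set" and lam :: "'a set \<Rightarrow> nat" and A :: "('a \<times> 'a) set"
  assumes "simple_temporal_clique V lam"
    and "is_Eminus V lam A"
  shows "temporal_spanner V lam (fireworks_cover V lam A)"
proof -
  let ?S = "fireworks_cover V lam A"
  have sub: "?S \<subseteq> clique_edges V" unfolding fireworks_cover_def by blast
  have "\<exists>xs. journey ?S lam x y xs" if xy: "x \<in> V" "y \<in> V" "x \<noteq> y" for x y
  proof (cases "emitter V (E_T lam A) x")
    case True
    have "{x, y} \<in> ?S" unfolding fireworks_cover_def using True ce_mem[OF xy] by blast
    then have "journey ?S lam x y [x, y]" unfolding journey_def by auto
    then show ?thesis by blast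
  next
    case False
    then have "out_deg (E_T lam A) x \<noteq> 0" using xy unfolding emitter_def by auto
    then obtain b where "(x, b) \<in> E_T lam A" using out_deg_ex[of "E_T lam A" x] by blast
    then show ?thesis using main_L[OF assms] xy by blast
  qed
  then show ?thesis unfolding temporal_spanner_def using sub by blast
qed

end
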